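(* Let $(M,J)$ be a closed almost complex manifold. $J$ being pure is equivalent to $\iota_{1,1}$ being injective, which is also equivalent to $\iota_{(2,0),(0,2)}$ being injective. If $J$ is full then both $\iota_{1,1}$ and $\iota_{(2,0),(0,2)}$ are surjective. Consequently, if $J$ is pure and full, then both $\iota_{1,1}$ and $\iota_{(2,0),(0,2)}$ are isomorphisms.
   Context: $\mathcal E_2(M)$ is the space of real 2-currents (continuous linear functionals on smooth real 2-forms with the $C^\infty$ topology), with boundary operator $d$ dual to exterior derivative. It splits as $\mathcal E_{1,1}\oplus\mathcal E_{(2,0),(0,2)}$, where $\mathcal E_{1,1}$ (resp. $\mathcal E_{(2,0),(0,2)}$) consists of currents vanishing on all real 2-forms $\alpha$ with $\alpha(Jv,Jw)=-\alpha(v,w)$ (resp. $=\alpha(v,w)$); $\pi_{1,1},\pi_{(2,0),(0,2)}$ are the projections. $\mathcal Z\subset\mathcal E_2(M)$ is the space of closed 2-currents and $\mathcal B=d\mathcal E_3(M)$ the boundaries; for $S=(1,1)$ or $(2,0),(0,2)$, $\mathcal Z_S=\mathcal Z\cap\mathcal E_S$, $\mathcal B_S=\mathcal B\cap\mathcal E_S$, and $\iota_S:\mathcal Z_S/\mathcal B_S\to\pi_S\mathcal Z/\pi_S\mathcal B$ is induced by inclusion. $H^J_S(M)_{\mathbb R}=\mathcal Z_S/\mathcal B_S$, viewed as a subspace of de Rham homology $H_2(M;\mathbb R)=\mathcal Z/\mathcal B$. $J$ is pure if $H^J_{1,1}(M)_{\mathbb R}\cap H^J_{(2,0),(0,2)}(M)_{\mathbb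 R}=0$, and full if $H^J_{1,1}(M)_{\mathbb R}+H^J_{(2,0),(0,2)}(M)_{\mathbb R}=H_2(M;\mathbb R)$. *)

theory Defs
  imports "HOL-Analysis.Analysis"
begin

text \<open>The real vector space 'a plays the
role of the 2-currents E_2(M); bd3 :: 'c \<Rightarrow> 'a is the boundary operator on 3-currents
(so the boundaries are B = range bd3) and bd2 :: 'a \<Rightarrow> 'b the boundary operator on
2-currents (so the cycles are Z = ker bd2).  The type decomposition
E_2 = E_{1,1} \<oplus> E_{(2,0),(0,2)} is given by the linear projection p = pi_{1,1},
and pi_{(2,0),(0,2)} = id - p.  For a projection q, E_q = {x. q x = x}.\<close>

definition coset :: "'a::ab_group_add set \<Rightarrow> 'a \<Rightarrow> 'a set" where
  "coset U x = {x + u | u. u \<in> U}"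

text \<open>V/U as the set of cosets of U meeting V (for subspaces U \<subseteq> V).\<close>
definition quot :: "'a::ab_group_add set \<Rightarrow> 'a set \<Rightarrow> 'a set set" where
  "quot V U = coset U ` V"

definition setplus :: "'a::ab_group_add set \<Rightarrow> 'a set \<Rightarrow> 'a set" where
  "setplus A C = {a + c | a c. a \<in> A \<and> c \<in> C}"

definition cycles :: "('a \<Rightarrow> 'b::zero) \<Rightarrow> 'a set" where
  "cycles bd2 = {z. bd2 z = 0}"

definition boundaries :: "('c \<Rightarrow> 'a) \<Rightarrow> 'a set" where
  "boundaries bd3 = range bd3"

definition Zs :: "('a \<Rightarrow> 'b::zero) \<Rightarrow> ('a \<Rightarrow> 'a) \<Rightarrow> 'a set" where
  "Zs bd2 q = {z \<in> cycles bd2. q z = z}"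

definition Bs :: "('c \<Rightarrow> 'a) \<Rightarrow> ('a \<Rightarrow> 'a) \<Rightarrow> 'a set" where
  "Bs bd3 q = {b \<in> boundaries bd3. q b = b}"

text \<open>iota_S : Z_S/B_S \<rightarrow> pi_S Z / pi_S B, sending the coset z + B_S to
z + pi_S B (= (z + B_S) + pi_S B, well defined since B_S \<subseteq> pi_S B).\<close>
definition iota :: "('c \<Rightarrow> 'a::ab_group_add) \<Rightarrow> ('a \<Rightarrow> 'a) \<Rightarrow> 'a set \<Rightarrow> 'a set" where
  "iota bd3 q C = setplus C (q ` boundaries bd3)"

definition iota_domain :: "('a::ab_group_add \<Rightarrow> 'b::zero) \<Rightarrow> ('c \<Rightarrow> 'a) \<Rightarrow> ('a \<Rightarrow> 'a) \<Rightarrow> 'a set set" where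
  "iota_domain bd2 bd3 q = quot (Zs bd2 q) (Bs bd3 q)"

definition iota_codomain :: "('a::ab_group_add \<Rightarrow> 'b::zero) \<Rightarrow> ('c \<Rightarrow> 'a) \<Rightarrow> ('a \<Rightarrow> 'a) \<Rightarrow> 'a set set" where
  "iota_codomain bd2 bd3 q = quot (q ` cycles bd2) (q ` boundaries bd3)"

definition iota_injective where
  "iota_injective bd2 bd3 q \<longleftrightarrow> inj_on (iota bd3 q) (iota_domain bd2 bd3 q)"

definition iota_surjective where
  "iota_surjective bd2 bd3 q \<longleftrightarrow> iota bd3 q ` iota_domain bd2 bd3 q = iota_codomain bd2 bd3 q"

definition iota_iso where
  "iota_iso bd2 bd3 q \<longleftrightarrow> iota_injective bd2 bd3 q \<and> iota_surjective bd2 bd3 q"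

text \<open>H_S = Z_S/B_S viewed inside H_2 = Z/B (image of Z_S in Z/B).\<close>
definition Hs :: "('a::ab_group_add \<Rightarrow> 'b::zero) \<Rightarrow> ('c \<Rightarrow> 'a) \<Rightarrow> ('a \<Rightarrow> 'a) \<Rightarrow> 'a set set" where
  "Hs bd2 bd3 q = coset (boundaries bd3) ` Zs bd2 q"

definition homology :: "('a::ab_group_add \<Rightarrow> 'b::zero) \<Rightarrow> ('c \<Rightarrow> 'a) \<Rightarrow> 'a set set" where
  "homology bd2 bd3 = quot (cycles bd2) (boundaries bd3)"

definition pure :: "('a::ab_group_add \<Rightarrow> 'b::zero) \<Rightarrow> ('c \<Rightarrow> 'a) \<Rightarrow> ('a \<Rightarrow> 'a) \<Rightarrow> bool" where
  "pure bd2 bd3 p \<longleftrightarrow>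
     Hs bd2 bd3 p \<inter> Hs bd2 bd3 (\<lambda>x. x - p x) = {coset (boundaries bd3) 0}"

definition full :: "('a::ab_group_add \<Rightarrow> 'b::zero) \<Rightarrow> ('c \<Rightarrow> 'a) \<Rightarrow> ('a \<Rightarrow> 'a) \<Rightarrow> bool" where
  "full bd2 bd3 p \<longleftrightarrow>
     {coset (boundaries bd3) (z1 + z2) | z1 z2.
        z1 \<in> Zs bd2 p \<and> z2 \<in> Zs bd2 (\<lambda>x. x - p x)} = homology bd2 bd3"

end

theory Submission
  imports Defs
begin

lemma coset_eq:
  assumes "(0::'a::ab_group_add) \<in> U" "\<And>a b. a \<in> U \<Longrightarrow> b \<in> U \<Longrightarrow> a - b \<in> U"
  shows "coset U x = coset U y \<longleftrightarrow> x - y \<in> U"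
proof
  have neg: "\<And>a. a \<in> U \<Longrightarrow> -a \<in> U" using assms by (metis diff_0)
  have add: "\<And>a b. a \<in> U \<Longrightarrow> b \<in> U \<Longrightarrow> a + b \<in> U" using assms neg
    by (metis diff_minus_eq_add)
  assume "coset U x = coset U y"
  moreover have "x \<in> coset U x" unfolding coset_def using assms(1) by force
  ultimately obtain u where "u \<in> U" "x = y + u" unfolding coset_def by auto
  then show "x - y \<in> U" by simp
next
  have neg: "\<And>a. a \<in> U \<Longrightarrow> -a \<in> U" using assms by (metis diff_0)
  have add: "\<And>a b. a \<in> U \<Longrightarrow> b \<in> U \<Longrightarrow> a + b \<in> U" using assms neg
    by (metis diff_minus_eq_add)
  assume h: "x - y \<in> U"
  show "coset U x = coset U y"
    unfolding coset_def
  proof safe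
    fix u assume "u \<in> U"
    then show "\<exists>v. x + u = y + v \<and> v \<in> U"
      by (intro exI[of _ "(x - y) + u"]) (auto simp: h add)
  next
    fix u assume "u \<in> U"
    then show "\<exists>v. y + u = x + v \<and> v \<in> U"
      by (intro exI[of _ "u - (x - y)"]) (auto simp: h assms(2))
  qed
qed

context
  fixes bd3 :: "'c::real_vector \<Rightarrow> 'a::real_vector"
    and bd2 :: "'a \<Rightarrow> 'b::real_vector"
    and q :: "'a \<Rightarrow> 'a"
  assumes l3: "linear bd3" and l2: "linear bd2" and dd: "\<And>x. bd2 (bd3 x) = 0"
    and lq: "linear q" and qq: "\<And>x. q (q x) = q x"
begin

lemma B_0: "0 \<in> boundaries bd3"
  unfolding boundaries_def using linear_0[OF l3] by (metis rangeI)

lemma B_diff: "a \<in> boundaries bd3 \<Longrightarrow> b \<in> boundaries bd3 \<Longrightarrow> a - b \<in> boundaries bd3"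
proof -
  assume "a \<in> boundaries bd3" "b \<in> boundaries bd3"
  then obtain a' b' where "a = bd3 a'" "b = bd3 b'" unfolding boundaries_def by auto
  then have "a - b = bd3 (a' - b')" using linear_diff[OF l3] by simp
  then show ?thesis unfolding boundaries_def by simp
qed

lemma B_cyc: "a \<in> boundaries bd3 \<Longrightarrow> bd2 a = 0"
  unfolding boundaries_def using dd by auto

lemma qB_0: "0 \<in> q ` boundaries bd3"
  using B_0 linear_0[OF lq] by (metis image_eqI)

lemma qB_diff: "a \<in> q ` boundaries bd3 \<Longrightarrow> b \<in> q ` boundaries bd3 \<Longrightarrow> a - b \<in> q ` boundaries bd3"
proof -
  assume "a \<in> q ` boundaries bd3" "b \<in> q ` boundaries bd3"
  then obtain a' b' where "a' \<in> boundaries bd3" "b' \<in> boundaries bd3" "a = q a'" "b = q b'" by auto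
  then show ?thesis using B_diff linear_diff[OF lq] by (metis image_eqI)
qed

lemma Bs_0: "0 \<in> Bs bd3 q"
  unfolding Bs_def using B_0 linear_0[OF lq] by simp

lemma Bs_diff: "a \<in> Bs bd3 q \<Longrightarrow> b \<in> Bs bd3 q \<Longrightarrow> a - b \<in> Bs bd3 q"
  unfolding Bs_def using B_diff linear_diff[OF lq] by simp

lemma Zs_diff: "a \<in> Zs bd2 q \<Longrightarrow> b \<in> Zs bd2 q \<Longrightarrow> a - b \<in> Zs bd2 q"
  unfolding Zs_def cycles_def using linear_diff[OF lq] linear_diff[OF l2] by simp

lemma Zs_0: "0 \<in> Zs bd2 q"
  unfolding Zs_def cycles_def using linear_0[OF lq] linear_0[OF l2] by simp

lemma Bs_sub: "Bs bd3 q \<subseteq> q ` boundaries bd3"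
  unfolding Bs_def by (auto intro: rev_image_eqI)

lemma iota_coset: "iota bd3 q (coset (Bs bd3 q) z) = coset (q ` boundaries bd3) z"
  unfolding iota_def setplus_def coset_def
proof (intro set_eqI iffI)
  fix x assume "x \<in> {a + c |a c. a \<in> {z + u |u. u \<in> Bs bd3 q} \<and> c \<in> q ` boundaries bd3}"
  then obtain u v where x: "x = z + u + v" and u: "u \<in> Bs bd3 q" and v: "v \<in> q ` boundaries bd3"
    by blast
  have u': "u \<in> q ` boundaries bd3" using Bs_sub u by blast
  have "0 - v \<in> q ` boundaries bd3" by (rule qB_diff[OF qB_0 v])
  then have "u - (0 - v) \<in> q ` boundaries bd3" by (rule qB_diff[OF u'])
  then have uv: "u + v \<in> q ` boundaries bd3" by simp
  have "x = z + (u + v)" using x by (simp add: add.assoc)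
  then show "x \<in> {z + u |u. u \<in> q ` boundaries bd3}" using uv by blast
next
  fix x assume "x \<in> {z + u |u. u \<in> q ` boundaries bd3}"
  then obtain w where x: "x = z + w" and w: "w \<in> q ` boundaries bd3" by blast
  have "z = z + 0" by simp
  then show "x \<in> {a + c |a c. a \<in> {z + u |u. u \<in> Bs bd3 q} \<and> c \<in> q ` boundaries bd3}"
    using x w Bs_0 by blast
qed

lemma inj_iff:
  "iota_injective bd2 bd3 q \<longleftrightarrow>
     (\<forall>z\<in>Zs bd2 q. z \<in> q ` boundaries bd3 \<longrightarrow> z \<in> boundaries bd3)"
proof -
  have ceB: "\<And>x y. coset (Bs bd3 q) x = coset (Bs bd3 q) y \<longleftrightarrow> x - y \<in> Bs bd3 q"
    by (rule coset_eq[OF Bs_0 Bs_diff])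
  have ceQ: "\<And>x y. coset (q ` boundaries bd3) x = coset (q ` boundaries bd3) y \<longleftrightarrow> x - y \<in> q ` boundaries bd3"
    by (rule coset_eq[OF qB_0 qB_diff])
  have "iota_injective bd2 bd3 q \<longleftrightarrow> (\<forall>z\<in>Zs bd2 q. z \<in> q ` boundaries bd3 \<longrightarrow> z \<in> Bs bd3 q)"
  proof
    assume inj: "iota_injective bd2 bd3 q"
    show "\<forall>z\<in>Zs bd2 q. z \<in> q ` boundaries bd3 \<longrightarrow> z \<in> Bs bd3 q"
    proof (intro ballI impI)
      fix z assume z: "z \<in> Zs bd2 q" and zb: "z \<in> q ` boundaries bd3"
      have "iota bd3 q (coset (Bs bd3 q) z) = iota bd3 q (coset (Bs bd3 q) 0)"
        unfolding iota_coset ceQ using zb by simp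
      moreover have "coset (Bs bd3 q) z \<in> iota_domain bd2 bd3 q"
        unfolding iota_domain_def quot_def using z by (rule imageI)
      moreover have "coset (Bs bd3 q) 0 \<in> iota_domain bd2 bd3 q"
        unfolding iota_domain_def quot_def using Zs_0 by (rule imageI)
      ultimately have "coset (Bs bd3 q) z = coset (Bs bd3 q) 0"
        using inj unfolding iota_injective_def inj_on_def by blast
      then show "z \<in> Bs bd3 q" unfolding ceB by simp
    qed
  next
    assume c: "\<forall>z\<in>Zs bd2 q. z \<in> q ` boundaries bd3 \<longrightarrow> z \<in> Bs bd3 q"
    show "iota_injective bd2 bd3 q"
      unfolding iota_injective_def
    proof (rule inj_onI)
      fix X Y assume X: "X \<in> iota_domain bd2 bd3 q" and Y: "Y \<in> iota_domain bd2 bd3 q"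
        and e: "iota bd3 q X = iota bd3 q Y"
      obtain z1 where z1: "z1 \<in> Zs bd2 q" "X = coset (Bs bd3 q) z1"
        using X unfolding iota_domain_def quot_def by blast
      obtain z2 where z2: "z2 \<in> Zs bd2 q" "Y = coset (Bs bd3 q) z2"
        using Y unfolding iota_domain_def quot_def by blast
      have "z1 - z2 \<in> q ` boundaries bd3" using e unfolding z1(2) z2(2) iota_coset ceQ .
      moreover have "z1 - z2 \<in> Zs bd2 q" by (rule Zs_diff[OF z1(1) z2(1)])
      ultimately have "z1 - z2 \<in> Bs bd3 q" using c by blast
      then show "X = Y" unfolding z1(2) z2(2) ceB .
    qed
  qed
  also have "\<dots> \<longleftrightarrow> (\<forall>z\<in>Zs bd2 q. z \<in> q ` boundaries bd3 \<longrightarrow> z \<in> boundaries bd3)"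
    unfolding Bs_def Zs_def by auto
  finally show ?thesis .
qed

lemma pure_iff:
  "pure bd2 bd3 q \<longleftrightarrow>
     (\<forall>z\<in>Zs bd2 q. z \<in> q ` boundaries bd3 \<longrightarrow> z \<in> boundaries bd3)"
proof -
  let ?B = "boundaries bd3"
  have ce: "\<And>x y. coset ?B x = coset ?B y \<longleftrightarrow> x - y \<in> ?B"
    by (rule coset_eq[OF B_0 B_diff])
  have z0: "0 \<in> Zs bd2 (\<lambda>x. x - q x)"
    unfolding Zs_def cycles_def using linear_0[OF l2] linear_0[OF lq] by simp
  have in0: "coset ?B 0 \<in> Hs bd2 bd3 q \<inter> Hs bd2 bd3 (\<lambda>x. x - q x)"
    unfolding Hs_def using Zs_0 z0 by auto
  show ?thesis
  proof
    assume pu: "pure bd2 bd3 q"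
    show "\<forall>z\<in>Zs bd2 q. z \<in> q ` ?B \<longrightarrow> z \<in> ?B"
    proof safe
      fix z b assume z: "z \<in> Zs bd2 q" and b: "b \<in> ?B" and zq: "q b \<in> Zs bd2 q"
      have qz: "q (q b) = q b" by (rule qq)
      define z2 where "z2 = q b - b"
      have "bd2 z2 = 0" using zq b B_cyc linear_diff[OF l2] unfolding z2_def Zs_def cycles_def by simp
      moreover have "z2 - q z2 = z2" unfolding z2_def using linear_diff[OF lq] qq by simp
      ultimately have "z2 \<in> Zs bd2 (\<lambda>x. x - q x)" unfolding Zs_def cycles_def by simp
      moreover have "coset ?B (q b) = coset ?B z2" unfolding ce z2_def using b by simp
      ultimately have "coset ?B (q b) \<in> Hs bd2 bd3 q \<inter> Hs bd2 bd3 (\<lambda>x. x - q x)"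
        unfolding Hs_def using zq by auto
      then have "coset ?B (q b) = coset ?B 0" using pu unfolding pure_def by auto
      then show "q b \<in> ?B" unfolding ce by simp
    qed
  next
    assume c: "\<forall>z\<in>Zs bd2 q. z \<in> q ` ?B \<longrightarrow> z \<in> ?B"
    have "Hs bd2 bd3 q \<inter> Hs bd2 bd3 (\<lambda>x. x - q x) \<subseteq> {coset ?B 0}"
    proof
      fix X assume "X \<in> Hs bd2 bd3 q \<inter> Hs bd2 bd3 (\<lambda>x. x - q x)"
      then obtain z1 z2 where z1: "z1 \<in> Zs bd2 q" and z2: "z2 \<in> Zs bd2 (\<lambda>x. x - q x)"
        and X: "X = coset ?B z1" "X = coset ?B z2" unfolding Hs_def by auto
      have b: "z1 - z2 \<in> ?B" using X(1) X(2) ce[of z1 z2] by simp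
      have "z2 - q z2 = z2" using z2 unfolding Zs_def by simp
      then have "q z2 = 0" by (simp add: diff_eq_eq)
      then have "q (z1 - z2) = z1" using z1 linear_diff[OF lq] unfolding Zs_def by simp
      then have "z1 \<in> q ` ?B" using b by (metis image_eqI)
      then have "z1 \<in> ?B" using c z1 by blast
      then have "coset ?B z1 = coset ?B 0" using ce[of z1 0] by simp
      then show "X \<in> {coset ?B 0}" using X(1) by simp
    qed
    then show "pure bd2 bd3 q" unfolding pure_def using in0 by blast
  qed
qed

lemma surj_of:
  assumes f: "\<forall>z\<in>cycles bd2. \<exists>z1\<in>Zs bd2 q. \<exists>z2\<in>Zs bd2 (\<lambda>x. x - q x).
     z - (z1 + z2) \<in> boundaries bd3"
  shows "iota_surjective bd2 bd3 q"
proof -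
  let ?C = "coset (q ` boundaries bd3)"
  have ce: "\<And>x y. ?C x = ?C y \<longleftrightarrow> x - y \<in> q ` boundaries bd3"
    by (rule coset_eq[OF qB_0 qB_diff])
  have "iota bd3 q ` iota_domain bd2 bd3 q = ?C ` Zs bd2 q"
    unfolding iota_domain_def quot_def image_image iota_coset ..
  also have "\<dots> = ?C ` q ` cycles bd2"
  proof safe
    fix z assume "z \<in> Zs bd2 q"
    then have "z \<in> cycles bd2" "q z = z" unfolding Zs_def by auto
    then have "z \<in> q ` cycles bd2" by (intro rev_image_eqI[of z]) simp_all
    then show "?C z \<in> ?C ` q ` cycles bd2" by (rule imageI)
  next
    fix z assume zc: "z \<in> cycles bd2"
    then obtain z1 z2 where z1: "z1\<in>Zs bd2 q" and z2: "z2\<in>Zs bd2 (\<lambda>x. x - q x)"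
      and b: "z - (z1 + z2) \<in> boundaries bd3" using f by blast
    have "z2 - q z2 = z2" using z2 unfolding Zs_def by simp
    then have "q z2 = 0" by (simp add: diff_eq_eq)
    moreover have "q z1 = z1" using z1 unfolding Zs_def by simp
    ultimately have "q (z - (z1 + z2)) = q z - z1" using linear_diff[OF lq] linear_add[OF lq] by simp
    then have "q z - z1 \<in> q ` boundaries bd3" using b by (metis image_eqI)
    then have "?C (q z) = ?C z1" using ce by simp
    then show "?C (q z) \<in> ?C ` Zs bd2 q" using z1 by auto
  qed
  finally show ?thesis unfolding iota_surjective_def iota_codomain_def quot_def by (simp add: image_image)
qed

end

lemma linear_comp_idem:
  assumes "linear (p::'a::real_vector \<Rightarrow> 'a)" "\<And>x. p (p x) = p x"
  shows "linear (\<lambda>x. x - p x)" "\<And>x. (\<lambda>x. x - p x) ((\<lambda>x. x - p x) x) = (\<lambda>x. x - p x) x"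
proof -
  show "linear (\<lambda>x. x - p x)"
    by (rule linearI) (simp_all add: linear_add[OF assms(1)] linear_scale[OF assms(1)] algebra_simps)
  show "\<And>x. (\<lambda>x. x - p x) ((\<lambda>x. x - p x) x) = (\<lambda>x. x - p x) x"
    by (simp add: linear_diff[OF assms(1)] assms(2))
qed

theorem lemma2p18:
  fixes bd3 :: "'c::real_vector \<Rightarrow> 'a::real_vector"
    and bd2 :: "'a \<Rightarrow> 'b::real_vector"
    and p :: "'a \<Rightarrow> 'a"
  assumes "linear bd3" and "linear bd2" and "\<And>x. bd2 (bd3 x) = 0"
    and "linear p" and "\<And>x. p (p x) = p x"
  shows "(pure bd2 bd3 p \<longleftrightarrow> iota_injective bd2 bd3 p)
       \<and> (iota_injective bd2 bd3 p \<longleftrightarrow> iota_injective bd2 bd3 (\<lambda>x. x - p x))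
       \<and> (full bd2 bd3 p \<longrightarrow>
            iota_surjective bd2 bd3 p \<and> iota_surjective bd2 bd3 (\<lambda>x. x - p x))
       \<and> (pure bd2 bd3 p \<and> full bd2 bd3 p \<longrightarrow>
            iota_iso bd2 bd3 p \<and> iota_iso bd2 bd3 (\<lambda>x. x - p x))"
proof -
  note lr = linear_comp_idem[OF assms(4,5)]
  have pp: "(\<lambda>x. x - (x - p x)) = p" by auto
  have pure_sym: "pure bd2 bd3 (\<lambda>x. x - p x) = pure bd2 bd3 p"
    unfolding pure_def pp by (simp add: Int_commute)
  have A: "pure bd2 bd3 p \<longleftrightarrow> iota_injective bd2 bd3 p"
    using pure_iff[of bd3 bd2 p, OF assms] inj_iff[of bd3 bd2 p, OF assms] by simp
  have B: "pure bd2 bd3 p \<longleftrightarrow> iota_injective bd2 bd3 (\<lambda>x. x - p x)"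
    using pure_iff[of bd3 bd2 "\<lambda>x. x - p x", OF assms(1-3) lr] inj_iff[of bd3 bd2 "\<lambda>x. x - p x", OF assms(1-3) lr] pure_sym by simp
  have ce: "\<And>x y. coset (boundaries bd3) x = coset (boundaries bd3) y \<longleftrightarrow> x - y \<in> boundaries bd3"
    by (rule coset_eq[OF B_0[of bd3 bd2 p, OF assms] B_diff[of bd3 bd2 p, OF assms]])
  have C: "iota_surjective bd2 bd3 p \<and> iota_surjective bd2 bd3 (\<lambda>x. x - p x)"
    if fu: "full bd2 bd3 p"
  proof -
    have f: "\<forall>z\<in>cycles bd2. \<exists>z1\<in>Zs bd2 p. \<exists>z2\<in>Zs bd2 (\<lambda>x. x - p x).
       z - (z1 + z2) \<in> boundaries bd3"
    proof
      fix z assume "z \<in> cycles bd2"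
      then have "coset (boundaries bd3) z \<in> homology bd2 bd3" unfolding homology_def quot_def by (rule imageI)
      then have "coset (boundaries bd3) z \<in> {coset (boundaries bd3) (z1 + z2) | z1 z2.
        z1 \<in> Zs bd2 p \<and> z2 \<in> Zs bd2 (\<lambda>x. x - p x)}"
        using fu unfolding full_def by (simp only:)
      then obtain z1 z2 where h: "z1 \<in> Zs bd2 p" "z2 \<in> Zs bd2 (\<lambda>x. x - p x)"
        "coset (boundaries bd3) z = coset (boundaries bd3) (z1 + z2)"
        by (auto simp only: mem_Collect_eq)
      then have "z - (z1 + z2) \<in> boundaries bd3" using ce by (simp only:)
      then show "\<exists>z1\<in>Zs bd2 p. \<exists>z2\<in>Zs bd2 (\<lambda>x. x - p x). z - (z1 + z2) \<in> boundaries bd3"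
        using h(1,2) by blast
    qed
    have f2: "\<forall>z\<in>cycles bd2. \<exists>z1\<in>Zs bd2 (\<lambda>x. x - p x). \<exists>z2\<in>Zs bd2 (\<lambda>x. x - (x - p x)).
       z - (z1 + z2) \<in> boundaries bd3"
      unfolding pp
    proof
      fix z assume "z \<in> cycles bd2"
      then obtain z1 z2 where h: "z1 \<in> Zs bd2 p" "z2 \<in> Zs bd2 (\<lambda>x. x - p x)"
         "z - (z1 + z2) \<in> boundaries bd3" using f by blast
      then have "z - (z2 + z1) \<in> boundaries bd3" by (simp add: add.commute)
      then show "\<exists>z1\<in>Zs bd2 (\<lambda>x. x - p x). \<exists>z2\<in>Zs bd2 p. z - (z1 + z2) \<in> boundaries bd3"
        using h(1,2) by blast
    qed
    show ?thesis using surj_of[of bd3 bd2 p, OF assms f] surj_of[of bd3 bd2 "\<lambda>x. x - p x", OF assms(1-3) lr f2] by simp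
  qed
  show ?thesis using A B C unfolding iota_iso_def by blast
qed

end
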